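(* Let $K$ be a field, $m\ge2$, $d_1,\ldots,d_m$ positive integers, and $I_2(D)\subset K[x_1,\ldots,x_m,y_1,\ldots,y_m]$ the ideal generated by the $2$-minors of $D=\begin{pmatrix}x_1^{d_1}&\cdots&x_m^{d_m}\\ y_1^{d_1}&\cdots&y_m^{d_m}\end{pmatrix}$. Then $I_2(D)$ is generated by its indispensable binomials.
   Context: A binomial $B\in I_2(D)$ is indispensable if every system of binomial generators of $I_2(D)$ contains $B$ or $-B$. *)

theory Defs
  imports "HOL-Library.Poly_Mapping"
begin

text \<open>Polynomial ring K[x_i, y_i : i in 'n] : variables are Inl i (= x_i) and Inr i (= y_i);
  monomials are exponent vectors, polynomials finitely supported coefficient maps.\<close>

type_synonym ('n, 'k) mpoly = "(('n + 'n) \<Rightarrow>\<^sub>0 nat) \<Rightarrow>\<^sub>0 'k"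

definition monom :: "('n + 'n \<Rightarrow>\<^sub>0 nat) \<Rightarrow> ('n, 'k::field) mpoly" where
  "monom a = Poly_Mapping.single a 1"

definition var_pow :: "('n + 'n) \<Rightarrow> nat \<Rightarrow> ('n, 'k::field) mpoly" where
  "var_pow v e = monom (Poly_Mapping.single v e)"

definition ideal_gen :: "('n, 'k::field) mpoly set \<Rightarrow> ('n, 'k) mpoly set" where
  "ideal_gen S = {p. \<exists>F c. finite F \<and> F \<subseteq> S \<and> p = (\<Sum>g\<in>F. c g * g)}"

definition minor2 :: "('n \<Rightarrow> nat) \<Rightarrow> 'n \<Rightarrow> 'n \<Rightarrow> ('n, 'k::field) mpoly" where
  "minor2 d i j = var_pow (Inl i) (d i) * var_pow (Inr j) (d j)
                 - var_pow (Inl j) (d j) * var_pow (Inr i) (d i)"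

definition I2 :: "('n \<Rightarrow> nat) \<Rightarrow> ('n, 'k::field) mpoly set" where
  "I2 d = ideal_gen {minor2 d i j | i j. i \<noteq> j}"

definition is_binomial :: "('n, 'k::field) mpoly \<Rightarrow> bool" where
  "is_binomial B \<longleftrightarrow> (\<exists>u v. u \<noteq> v \<and> B = monom u - monom v)"

definition binomial_gen_system :: "('n, 'k::field) mpoly set \<Rightarrow> ('n, 'k) mpoly set \<Rightarrow> bool" where
  "binomial_gen_system I G \<longleftrightarrow> G \<subseteq> I \<and> (\<forall>B\<in>G. is_binomial B) \<and> ideal_gen G = I"

definition indispensable :: "('n, 'k::field) mpoly set \<Rightarrow> ('n, 'k) mpoly \<Rightarrow> bool" where
  "indispensable I B \<longleftrightarrow> is_binomial B \<and> B \<in> I \<and>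
     (\<forall>G. binomial_gen_system I G \<longrightarrow> B \<in> G \<or> - B \<in> G)"

end

theory Submission
  imports Defs
begin

abbreviation lk where "lk \<equiv> Poly_Mapping.lookup"

lemma monom_mult: "(monom x :: ('n,'k::field) mpoly) * monom y = monom (x + y)"
  by (simp add: monom_def mult_single)

lemma minor2_eq: "(minor2 d i j :: ('n,'k::field) mpoly) =
   monom (Poly_Mapping.single (Inl i) (d i) + Poly_Mapping.single (Inr j) (d j))
 - monom (Poly_Mapping.single (Inl j) (d j) + Poly_Mapping.single (Inr i) (d i))"
  by (simp add: minor2_def var_pow_def monom_mult)

lemma minor2_swap: "(minor2 d j i :: ('n,'k::field) mpoly) = - minor2 d i j"
  by (simp add: minor2_def)

lemma lk_monom: "lk (monom u :: ('n,'k::field) mpoly) w = (if w = u then 1 else 0)"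
  by (simp add: monom_def lookup_single)

lemma keyL:
  assumes "lk (c * (monom \<alpha> :: ('n,'k::field) mpoly)) w \<noteq> 0"
  shows "\<exists>s. w = s + \<alpha>"
proof -
  have "w \<in> Poly_Mapping.keys (c * monom \<alpha>)" using assms by (metis in_keys_iff)
  then show ?thesis using keys_mult[of c "monom \<alpha>"] by (auto simp: monom_def)
qed

lemma keyL2:
  assumes "lk (c * g :: ('n,'k::field) mpoly) w \<noteq> 0"
  shows "\<exists>s v. w = s + v \<and> v \<in> Poly_Mapping.keys g"
proof -
  have "w \<in> Poly_Mapping.keys (c * g)" using assms by (metis in_keys_iff)
  then show ?thesis using keys_mult[of c g] by blast
qed

lemma lk_mult_monom_self: "lk (c * (monom \<alpha> :: ('n,'k::field) mpoly)) \<alpha> = lk c 0"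
proof -
  have "lk (c * monom \<alpha>) \<alpha> = (\<Sum>l. lk c l * (\<Sum>q. lk (monom \<alpha> :: ('n,'k) mpoly) q when \<alpha> = l + q))"
    by (rule lookup_mult)
  also have "\<dots> = (\<Sum>l. lk c l when l = 0)"
  proof (rule Sum_any.cong)
    fix l
    have "(\<Sum>q. lk (monom \<alpha> :: ('n,'k) mpoly) q when \<alpha> = l + q) = (\<Sum>q. (1::'k) when q = \<alpha> \<and> l = 0)"
      by (rule Sum_any.cong) (auto simp: lk_monom when_def)
    also have "\<dots> = (1 when l = 0)"
      by (cases "l = 0") (simp_all add: when_def)
    finally show "lk c l * (\<Sum>q. lk (monom \<alpha> :: ('n,'k) mpoly) q when \<alpha> = l + q) = (lk c l when l = 0)"
      by (simp add: when_def)
  qed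
  also have "\<dots> = lk c 0" by simp
  finally show ?thesis .
qed

definition cd :: "('n + 'n \<Rightarrow>\<^sub>0 nat) \<Rightarrow> 'n \<Rightarrow> nat" where
  "cd w k = lk w (Inl k) + lk w (Inr k)"

lemma cd_add: "cd (s + w) k = cd s k + cd w k"
  by (simp add: cd_def lookup_add)

lemma eqL:
  assumes "w = s + \<alpha>" "\<forall>k. cd w k \<le> cd \<alpha> k"
  shows "s = 0"
proof (rule poly_mapping_eqI)
  fix v
  have "cd s k = 0" for k using assms cd_add[of s \<alpha> k] by (metis add_le_same_cancel2 le_zero_eq)
  then show "lk s v = lk 0 v" by (cases v) (auto simp: cd_def)
qed


definition Qp :: "('n + 'n \<Rightarrow>\<^sub>0 nat) \<Rightarrow> ('n + 'n \<Rightarrow>\<^sub>0 nat) \<Rightarrow> ('n,'k::field) mpoly \<Rightarrow> bool" where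
  "Qp a b p \<longleftrightarrow> (\<forall>w. (\<forall>k. cd w k \<le> cd a k) \<longrightarrow> w \<noteq> a \<longrightarrow> w \<noteq> b \<longrightarrow> lk p w = 0) \<and> lk p b = - lk p a"

lemma Qp_0: "Qp a b 0" by (simp add: Qp_def)
lemma Qp_add: "Qp a b p \<Longrightarrow> Qp a b q \<Longrightarrow> Qp a b (p + q)"
  by (simp add: Qp_def lookup_add)

lemma Qp_sum: "finite F \<Longrightarrow> (\<And>g. g \<in> F \<Longrightarrow> Qp a b (f g)) \<Longrightarrow> Qp a b (\<Sum>g\<in>F. f g)"
  by (induction F rule: finite_induct) (auto simp: Qp_0 Qp_add)

lemma cd_single: "cd (Poly_Mapping.single (Inl i) x + Poly_Mapping.single (Inr j) y) k
   = (if k = i then x else 0) + (if k = j then y else 0)"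
  by (simp add: cd_def lookup_add lookup_single)

lemma Qp_gen:
  fixes d :: "'n \<Rightarrow> nat"
  assumes dpos: "\<forall>i. d i > 0" and ij: "i \<noteq> j" and kl: "k \<noteq> l"
  defines "a \<equiv> Poly_Mapping.single (Inl i) (d i) + Poly_Mapping.single (Inr j) (d j)"
      and "b \<equiv> Poly_Mapping.single (Inl j) (d j) + Poly_Mapping.single (Inr i) (d i)"
  shows "Qp a b (c * (minor2 d k l :: ('n,'k::field) mpoly))"
proof -
  have cda: "cd a k' = (if k' = i then d i else 0) + (if k' = j then d j else 0)" for k'
    unfolding a_def by (rule cd_single)
  have cdb: "cd b k' = cd a k'" for k'
    unfolding cda b_def by (simp add: cd_single)
  have ab: "a \<noteq> b"
  proof
    assume "a = b"
    then have "lk a (Inl i) = lk b (Inl i)" by simp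
    then show False using dpos[rule_format, of i] ij by (simp add: a_def b_def lookup_add lookup_single)
  qed
  have main: "Qp a b (c' * (minor2 d i j :: ('n,'k) mpoly))" for c'
  proof -
    have M: "c' * (minor2 d i j :: ('n,'k) mpoly) = c' * monom a - c' * monom b"
      by (simp add: minor2_eq a_def b_def right_diff_distrib)
    have za: "lk (c' * (monom a :: ('n,'k) mpoly)) w = 0" if "\<forall>k. cd w k \<le> cd a k" "w \<noteq> a" for w
    proof (rule ccontr)
      assume "lk (c' * (monom a :: ('n,'k) mpoly)) w \<noteq> 0"
      then obtain s where "w = s + a" using keyL by blast
      with eqL[OF this] that show False by simp
    qed
    have zb: "lk (c' * (monom b :: ('n,'k) mpoly)) w = 0" if "\<forall>k. cd w k \<le> cd a k" "w \<noteq> b" for w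
    proof (rule ccontr)
      assume "lk (c' * (monom b :: ('n,'k) mpoly)) w \<noteq> 0"
      then obtain s where "w = s + b" using keyL by blast
      with eqL[OF this] that cdb show False by simp
    qed
    have cla: "\<forall>k. cd a k \<le> cd a k" by simp
    have clb: "\<forall>k. cd b k \<le> cd a k" using cdb by simp
    show ?thesis unfolding Qp_def M lookup_minus
      using za zb za[OF clb ab[symmetric]] zb[OF cla ab]
      by (simp add: lk_mult_monom_self)
  qed
  consider "k = i \<and> l = j" | "k = j \<and> l = i" | "\<not> (k = i \<and> l = j) \<and> \<not> (k = j \<and> l = i)" by blast
  then show ?thesis
  proof cases
    case 1 then show ?thesis using main by simp
  next
    case 2
    have "c * (minor2 d k l :: ('n,'k) mpoly) = (- c) * minor2 d i j"
      using 2 by (simp add: minor2_swap[of d j i])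
    then show ?thesis using main[of "- c"] by simp
  next
    case 3
    define \<alpha> where "\<alpha> = Poly_Mapping.single (Inl k) (d k) + Poly_Mapping.single (Inr l) (d l)"
    define \<beta> where "\<beta> = Poly_Mapping.single (Inl l) (d l) + Poly_Mapping.single (Inr k) (d k)"
    have M: "c * (minor2 d k l :: ('n,'k) mpoly) = c * monom \<alpha> - c * monom \<beta>"
      by (simp add: minor2_eq \<alpha>_def \<beta>_def right_diff_distrib)
    have inij: "k' = i \<or> k' = j" if "cd w k' \<ge> d k'" "\<forall>k. cd w k \<le> cd a k" for w k'
    proof (rule ccontr)
      assume "\<not> (k' = i \<or> k' = j)"
      then have "cd a k' = 0" using cda by simp
      moreover have "d k' \<le> cd w k'" "cd w k' \<le> cd a k'" using that by auto
      ultimately have "d k' \<le> 0" by linarith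
      then show False using dpos[rule_format, of k'] by simp
    qed
    have zero: "lk (c * (monom \<gamma> :: ('n,'k) mpoly)) w = 0"
      if "\<forall>k. cd w k \<le> cd a k" "cd \<gamma> k \<ge> d k" "cd \<gamma> l \<ge> d l" for w \<gamma>
    proof (rule ccontr)
      assume "lk (c * (monom \<gamma> :: ('n,'k) mpoly)) w \<noteq> 0"
      then obtain s where "w = s + \<gamma>" using keyL by blast
      then have "cd w k \<ge> d k" "cd w l \<ge> d l" using that(2,3) cd_add[of s \<gamma> k] cd_add[of s \<gamma> l] by simp_all
      then have "k = i \<or> k = j" "l = i \<or> l = j" using inij that(1) by blast+
      then show False using 3 kl by blast
    qed
    have ga: "cd \<alpha> k \<ge> d k" "cd \<alpha> l \<ge> d l" "cd \<beta> k \<ge> d k" "cd \<beta> l \<ge> d l"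
      using kl by (auto simp: \<alpha>_def \<beta>_def cd_def lookup_add lookup_single)
    have all0: "lk (c * (minor2 d k l :: ('n,'k) mpoly)) w = 0" if "\<forall>k. cd w k \<le> cd a k" for w
      unfolding M lookup_minus using zero[OF that ga(1,2)] zero[OF that ga(3,4)] by simp
    have cla: "\<forall>k. cd a k \<le> cd a k" by simp
    have clb: "\<forall>k. cd b k \<le> cd a k" using cdb by simp
    show ?thesis unfolding Qp_def using all0 all0[OF cla] all0[OF clb] by simp
  qed
qed


lemma ideal_gen_mono: "S \<subseteq> T \<Longrightarrow> ideal_gen S \<subseteq> ideal_gen T"
  unfolding ideal_gen_def by (smt (verit) Collect_mono order_trans)

lemma ideal_gen_base: "g \<in> S \<Longrightarrow> g \<in> ideal_gen S"
  unfolding ideal_gen_def by (rule CollectI, rule exI[of _ "{g}"], rule exI[of _ "\<lambda>_. 1"]) simp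

lemma ideal_gen_zero: "0 \<in> ideal_gen S"
  unfolding ideal_gen_def by (rule CollectI, rule exI[of _ "{}"]) simp

lemma ideal_gen_add:
  assumes "p \<in> ideal_gen S" "q \<in> ideal_gen S" shows "p + q \<in> ideal_gen S"
proof -
  obtain F1 c1 where 1: "finite F1" "F1 \<subseteq> S" "p = (\<Sum>g\<in>F1. c1 g * g)" using assms(1) unfolding ideal_gen_def by blast
  obtain F2 c2 where 2: "finite F2" "F2 \<subseteq> S" "q = (\<Sum>g\<in>F2. c2 g * g)" using assms(2) unfolding ideal_gen_def by blast
  let ?F = "F1 \<union> F2"
  let ?c = "\<lambda>g. (if g \<in> F1 then c1 g else 0) + (if g \<in> F2 then c2 g else 0)"
  have fin: "finite ?F" using 1 2 by simp
  have "(\<Sum>g\<in>?F. ?c g * g) = (\<Sum>g\<in>?F. (if g \<in> F1 then c1 g * g else 0)) + (\<Sum>g\<in>?F. (if g \<in> F2 then c2 g * g else 0))"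
    by (subst sum.distrib[symmetric]) (rule sum.cong, auto simp: distrib_right)
  also have "\<dots> = p + q"
    using fin 1 2 sum.inter_restrict[OF fin, of "\<lambda>g. c1 g * g" F1] sum.inter_restrict[OF fin, of "\<lambda>g. c2 g * g" F2]
    by (simp add: Int_absorb1)
  finally show ?thesis unfolding ideal_gen_def using fin 1 2 by (intro CollectI exI[of _ ?F] exI[of _ ?c]) auto
qed

lemma ideal_gen_smult:
  assumes "p \<in> ideal_gen S" shows "r * p \<in> ideal_gen S"
proof -
  obtain F c where 1: "finite F" "F \<subseteq> S" "p = (\<Sum>g\<in>F. c g * g)" using assms unfolding ideal_gen_def by blast
  have "r * p = (\<Sum>g\<in>F. (r * c g) * g)" using 1 by (simp add: sum_distrib_left mult.assoc)
  then show ?thesis unfolding ideal_gen_def using 1 by (intro CollectI exI[of _ F] exI[of _ "\<lambda>g. r * c g"]) simp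
qed

lemma ideal_gen_sub:
  assumes "S \<subseteq> ideal_gen T" shows "ideal_gen S \<subseteq> ideal_gen T"
proof
  fix p assume "p \<in> ideal_gen S"
  then obtain F c where 1: "finite F" "F \<subseteq> S" "p = (\<Sum>g\<in>F. c g * g)" unfolding ideal_gen_def by blast
  have "F \<subseteq> S \<Longrightarrow> (\<Sum>g\<in>F. c g * g) \<in> ideal_gen T" using 1(1)
  proof (induction F rule: finite_induct)
    case empty then show ?case by (simp add: ideal_gen_zero)
  next
    case (insert x F) then show ?case using assms by (simp add: ideal_gen_add ideal_gen_smult subset_iff)
  qed
  then show "p \<in> ideal_gen T" using 1 by simp
qed

lemma Qp_ideal:
  assumes "\<And>g c. g \<in> S \<Longrightarrow> Qp a b (c * g)" "p \<in> ideal_gen S"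
  shows "Qp a b p"
proof -
  obtain F c where 1: "finite F" "F \<subseteq> S" "p = (\<Sum>g\<in>F. c g * g)" using assms(2) unfolding ideal_gen_def by blast
  show ?thesis unfolding 1(3) using 1 assms(1) by (intro Qp_sum) auto
qed

lemma minor_indisp:
  fixes d :: "'n \<Rightarrow> nat"
  assumes dpos: "\<forall>i. d i > 0" and ij: "i \<noteq> j"
  shows "indispensable (I2 d :: ('n,'k::field) mpoly set) (minor2 d i j)"
proof -
  define a where "a \<equiv> Poly_Mapping.single (Inl i) (d i) + Poly_Mapping.single (Inr j) (d j)"
  define b where "b \<equiv> Poly_Mapping.single (Inl j) (d j) + Poly_Mapping.single (Inr i) (d i)"
  have cda: "cd a k' = (if k' = i then d i else 0) + (if k' = j then d j else 0)" for k'
    unfolding a_def by (rule cd_single)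
  have cdb: "cd b k' = cd a k'" for k'
    unfolding cda b_def by (simp add: cd_single)
  have ab: "a \<noteq> b"
  proof
    assume "a = b"
    then have "lk a (Inl i) = lk b (Inl i)" by simp
    then show False using dpos[rule_format, of i] ij by (simp add: a_def b_def lookup_add lookup_single)
  qed
  have M: "(minor2 d i j :: ('n,'k) mpoly) = monom a - monom b"
    by (simp add: minor2_eq a_def b_def)
  have QI: "Qp a b p" if "p \<in> (I2 d :: ('n,'k) mpoly set)" for p
    using that unfolding I2_def
    by (rule Qp_ideal[rotated]) (auto intro: Qp_gen[OF dpos ij, folded a_def b_def])
  have inI: "(minor2 d i j :: ('n,'k) mpoly) \<in> I2 d"
    unfolding I2_def using ij by (intro ideal_gen_base) blast
  have bin: "is_binomial (minor2 d i j :: ('n,'k) mpoly)"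
    unfolding is_binomial_def M using ab by blast
  have "minor2 d i j \<in> G \<or> - minor2 d i j \<in> G" if G: "binomial_gen_system (I2 d :: ('n,'k) mpoly set) G" for G
  proof -
    have "(minor2 d i j :: ('n,'k) mpoly) \<in> ideal_gen G" using G inI by (simp add: binomial_gen_system_def)
    then obtain F c where 1: "finite F" "F \<subseteq> G" "minor2 d i j = (\<Sum>g\<in>F. c g * g)" unfolding ideal_gen_def by blast
    have "lk (minor2 d i j :: ('n,'k) mpoly) a = 1" unfolding M lookup_minus using ab by (simp add: lk_monom)
    then have "(\<Sum>g\<in>F. lk (c g * g) a) \<noteq> 0" using 1(3) by (simp add: lookup_sum)
    then obtain g where g: "g \<in> F" "lk (c g * g) a \<noteq> 0" by (meson sum.neutral)
    then obtain s w where sw: "a = s + w" "w \<in> Poly_Mapping.keys g" using keyL2 by blast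
    have gG: "g \<in> G" using g 1 by blast
    have gI: "g \<in> I2 d" using gG G by (auto simp: binomial_gen_system_def)
    obtain u v where uv: "u \<noteq> v" "g = monom u - monom v" using gG G by (auto simp: binomial_gen_system_def is_binomial_def)
    have Q: "Qp a b g" by (rule QI[OF gI])
    have clw: "\<forall>k. cd w k \<le> cd a k" using sw(1) cd_add[of s w] by simp
    have "lk g w \<noteq> 0" using sw(2) by (simp add: in_keys_iff)
    then have "w = a \<or> w = b" using Q clw unfolding Qp_def by blast
    then have ga: "lk g a \<noteq> 0" using Q \<open>lk g w \<noteq> 0\<close> unfolding Qp_def by auto
    then have gb: "lk g b \<noteq> 0" using Q unfolding Qp_def by auto
    have lkg: "lk g x = (if x = u then 1 else 0) - (if x = v then 1 else 0)" for x
      unfolding uv lookup_minus lk_monom by simp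
    have "a \<in> {u, v}" "b \<in> {u,v}" using ga gb lkg by (auto split: if_splits)
    then have "(u = a \<and> v = b) \<or> (u = b \<and> v = a)" using ab uv(1) by auto
    then show ?thesis using gG uv M by auto
  qed
  then show ?thesis unfolding indispensable_def using bin inI by blast
qed

theorem proposition4p6:
  fixes d :: "'n::finite \<Rightarrow> nat"
  assumes "card (UNIV :: 'n set) \<ge> 2"
    and "\<forall>i. d i > 0"
  shows "ideal_gen {B. indispensable (I2 d :: ('n, 'k::field) mpoly set) B} = I2 d"
proof
  show "ideal_gen {B. indispensable (I2 d :: ('n, 'k::field) mpoly set) B} \<subseteq> I2 d"
    unfolding I2_def[of d] by (rule ideal_gen_sub) (auto simp: indispensable_def I2_def)
  have "{minor2 d i j | i j. i \<noteq> j} \<subseteq> {B. indispensable (I2 d :: ('n, 'k::field) mpoly set) B}"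
    using minor_indisp[OF assms(2)] by blast
  then show "I2 d \<subseteq> ideal_gen {B. indispensable (I2 d :: ('n, 'k::field) mpoly set) B}"
    unfolding I2_def[of d] by (rule ideal_gen_mono)
qed

end
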